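(* The dominant face $\mathcal{D}$ of $\mathcal{R}_{JD}$ equals the set of all $(R_1,\ldots,R_K,C_1,\ldots,C_L)\in\mathbb{R}^{K+L}$ such that, for all $\mathcal{S}\subseteq[K]$ and $\mathcal{T}\subseteq[L]$, $$I(Y_{\mathcal{T}};\hat Y_{\mathcal{T}}\mid X_1^K)-I(X_{\mathcal{S}};\hat Y_{\mathcal{T}^c}\mid X_{\mathcal{S}^c})\ \le\ C(\mathcal{T})-R(\mathcal{S})\ \le\ I(Y_{\mathcal{T}};\hat Y_{\mathcal{T}}\mid X_{\mathcal{S}}).$$
   Context: Fix integers $K,L\ge 1$ and finite alphabets. Let $X_1,\ldots,X_K,Y_1,\ldots,Y_L,\hat Y_1,\ldots,\hat Y_L$ be random variables with joint pmf $\prod_{k=1}^K p(x_k)\, p(y_1,\ldots,y_L\mid x_1,\ldots,x_K)\prod_{\ell=1}^L p(\hat y_\ell\mid y_\ell)$. Thus the $X_k$ are mutually independent, and each $\hat Y_\ell$ is conditionally independent of all other variables given $Y_\ell$. Notation: $X_{\mathcal{A}}=(X_i:i\in\mathcal{A})$, and similarly for $Y_{\mathcal{B}},\hat Y_{\mathcal{B}}$. $X_1^K=(X_1,\ldots,X_K)$, $Y_1^L=(Y_1,\ldots,Y_L)$, $\hat Y_1^L=(\hat Y_1,\ldots,\hat Y_L)$. Complements are taken in $[K]$ for $X$-indices and in $[L]$ for $Y$/$\hat Y$-indices. $R(\mathcal{S})=\sum_{i\in\mathcal{S}}R_i$ and $C(\mathcal{T})=\sum_{j\in\mathcal{T}}C_j$.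 Empty sums and mutual informations involving an empty collection are $0$. $\mathcal{R}_{JD}$ is the set of $(R_1,\ldots,R_K,C_1,\ldots,C_L)\in\mathbb{R}_{\ge0}^{K+L}$ with $$C(\mathcal{T})-R(\mathcal{S})\ge I(Y_{\mathcal{T}};\hat Y_{\mathcal{T}}\mid X_1^K)-I(X_{\mathcal{S}};\hat Y_{\mathcal{T}^c}\mid X_{\mathcal{S}^c})\quad\text{for all }\mathcal{S}\subseteq[K],\ \mathcal{T}\subseteq[L].$$ The dominant face is $$\mathcal{D}=\{(R,C)\in\mathcal{R}_{JD}: C([L])-R([K])=I(Y_1^L;\hat Y_1^L\mid X_1^K)\}.$$ *)

theory Defs
  imports "HOL-Probability.Probability" "HOL-Library.FuncSet"
begin

definition CMI :: "'o pmf \<Rightarrow> ('o \<Rightarrow> 'x) \<Rightarrow> ('o \<Rightarrow> 'y) \<Rightarrow> ('o \<Rightarrow> 'z) \<Rightarrow> real" where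
  "CMI p A B C = prob_space.conditional_mutual_information (measure_pmf p) 2
     (count_space (range A)) (count_space (range B)) (count_space (range C)) A B C"

text \<open>The joint distribution of (X_1^K, Y_1^L, Yhat_1^L):
  prod_k p(x_k) * p(y | x) * prod_l p(yhat_l | y_l).  Indices are 1..K and 1..L.\<close>
definition jd_pmf :: "nat \<Rightarrow> nat \<Rightarrow> (nat \<Rightarrow> 'a pmf) \<Rightarrow> ((nat \<Rightarrow> 'a) \<Rightarrow> (nat \<Rightarrow> 'b) pmf)
    \<Rightarrow> (nat \<Rightarrow> 'b \<Rightarrow> 'c pmf) \<Rightarrow> ((nat \<Rightarrow> 'a) \<times> (nat \<Rightarrow> 'b) \<times> (nat \<Rightarrow> 'c)) pmf" where
  "jd_pmf K L px W Q =
     bind_pmf (Pi_pmf {1..K} undefined px) (\<lambda>x.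
     bind_pmf (W x) (\<lambda>y.
     bind_pmf (Pi_pmf {1..L} undefined (\<lambda>l. Q l (y l))) (\<lambda>yh.
     return_pmf (x, y, yh))))"

definition Xs :: "nat set \<Rightarrow> (nat \<Rightarrow> 'a) \<times> (nat \<Rightarrow> 'b) \<times> (nat \<Rightarrow> 'c) \<Rightarrow> (nat \<Rightarrow> 'a)" where
  "Xs S \<omega> = restrict (fst \<omega>) S"
definition Ys :: "nat set \<Rightarrow> (nat \<Rightarrow> 'a) \<times> (nat \<Rightarrow> 'b) \<times> (nat \<Rightarrow> 'c) \<Rightarrow> (nat \<Rightarrow> 'b)" where
  "Ys T \<omega> = restrict (fst (snd \<omega>)) T"
definition Yhs :: "nat set \<Rightarrow> (nat \<Rightarrow> 'a) \<times> (nat \<Rightarrow> 'b) \<times> (nat \<Rightarrow> 'c) \<Rightarrow> (nat \<Rightarrow> 'c)" where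
  "Yhs T \<omega> = restrict (snd (snd \<omega>)) T"

text \<open>The region R_JD: pairs (R, C) with R = (R_1..R_K), C = (C_1..C_L)
  (coordinates outside 1..K resp. 1..L are irrelevant).\<close>
definition R_JD :: "nat \<Rightarrow> nat \<Rightarrow> ((nat \<Rightarrow> 'a) \<times> (nat \<Rightarrow> 'b) \<times> (nat \<Rightarrow> 'c)) pmf
    \<Rightarrow> ((nat \<Rightarrow> real) \<times> (nat \<Rightarrow> real)) set" where
  "R_JD K L p = {(R, C).
     (\<forall>k\<in>{1..K}. 0 \<le> R k) \<and> (\<forall>l\<in>{1..L}. 0 \<le> C l) \<and>
     (\<forall>S\<subseteq>{1..K}. \<forall>T\<subseteq>{1..L}.
        sum C T - sum R S \<ge>
          CMI p (Ys T) (Yhs T) (Xs {1..K}) - CMI p (Xs S) (Yhs ({1..L} - T)) (Xs ({1..K} - S)))}"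

definition dominant_face :: "nat \<Rightarrow> nat \<Rightarrow> ((nat \<Rightarrow> 'a) \<times> (nat \<Rightarrow> 'b) \<times> (nat \<Rightarrow> 'c)) pmf
    \<Rightarrow> ((nat \<Rightarrow> real) \<times> (nat \<Rightarrow> real)) set" where
  "dominant_face K L p = {(R, C). (R, C) \<in> R_JD K L p \<and>
     sum C {1..L} - sum R {1..K} = CMI p (Ys {1..L}) (Yhs {1..L}) (Xs {1..K})}"

end

theory Submission
  imports Defs
begin


definition prb :: "'o pmf \<Rightarrow> ('o \<Rightarrow> 'x) \<Rightarrow> 'x \<Rightarrow> real" where
  "prb p F t = pmf (map_pmf F p) t"
definition hh :: "'o pmf \<Rightarrow> ('o \<Rightarrow> 'x) \<Rightarrow> real" where
  "hh p F = - (\<Sum>t\<in>range F. prb p F t * log 2 (prb p F t))"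

lemma hh_inv:
  assumes f: "\<And>\<omega>. F \<omega> = f (G \<omega>)" and g: "\<And>\<omega>. G \<omega> = g (F \<omega>)"
  shows "hh p F = hh p G"
proof -
  have gf: "g (f (G \<omega>)) = G \<omega>" for \<omega> by (simp only: f[symmetric] g[symmetric])
  have r: "range F = f ` range G" by (auto simp only: f)
  have inj: "inj_on f (range G)"
    unfolding inj_on_def by (metis gf imageE)
  have pre: "F -` {f t} = G -` {t}" if tG: "t \<in> range G" for t
  proof -
    obtain \<omega>0 where t: "t = G \<omega>0" using tG by blast
    show ?thesis unfolding t by (auto simp only: vimage_singleton_eq f) (metis gf)
  qed
  have "hh p F = - (\<Sum>t\<in>range G. prb p F (f t) * log 2 (prb p F (f t)))"
    unfolding hh_def r by (simp add: sum.reindex[OF inj])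
  also have "\<dots> = hh p G"
    unfolding hh_def prb_def pmf_map by (intro arg_cong[where f=uminus] sum.cong) (auto simp: pre)
  finally show ?thesis .
qed

lemma prb_group:
  assumes fin: "finite (range F)"
  shows "prb p (\<lambda>\<omega>. g (F \<omega>)) u = (\<Sum>t\<in>{t\<in>range F. g t = u}. prb p F t)"
proof -
  have "prb p (\<lambda>\<omega>. g (F \<omega>)) u = measure (map_pmf F p) (g -` {u})"
    unfolding prb_def by (simp add: map_pmf_comp[symmetric] pmf_map)
  also have "\<dots> = measure (map_pmf F p) (g -` {u} \<inter> set_pmf (map_pmf F p))"
    by (simp only: measure_Int_set_pmf)
  also have "g -` {u} \<inter> set_pmf (map_pmf F p) = {t\<in>range F. g t = u} \<inter> set_pmf (map_pmf F p)"
    by auto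
  also have "measure (map_pmf F p) \<dots> = measure (map_pmf F p) {t\<in>range F. g t = u}"
    by (simp only: measure_Int_set_pmf)
  also have "\<dots> = (\<Sum>t\<in>{t\<in>range F. g t = u}. prb p F t)"
    unfolding prb_def using fin by (intro measure_measure_pmf_finite) auto
  finally show ?thesis .
qed

lemma marg:
  assumes fin: "finite (range F)"
  shows "(\<Sum>t\<in>range F. prb p F t * \<phi> (g t)) =
         (\<Sum>u\<in>range (\<lambda>\<omega>. g (F \<omega>)). prb p (\<lambda>\<omega>. g (F \<omega>)) u * \<phi> u)"
proof -
  have r: "range (\<lambda>\<omega>. g (F \<omega>)) = g ` range F" by auto
  have "(\<Sum>u\<in>range (\<lambda>\<omega>. g (F \<omega>)). prb p (\<lambda>\<omega>. g (F \<omega>)) u * \<phi> u)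
     = (\<Sum>u\<in>g ` range F. (\<Sum>t\<in>{t\<in>range F. g t = u}. prb p F t * \<phi> (g t)))"
    unfolding r prb_group[OF fin] sum_distrib_right by (intro sum.cong) auto
  also have "\<dots> = (\<Sum>t\<in>range F. prb p F t * \<phi> (g t))"
    using fin by (intro sum.group) auto
  finally show ?thesis by simp
qed



lemma sf_pmf: "finite (range F) \<Longrightarrow> simple_function (measure_pmf p) F"
  by (simp add: simple_function_def)

lemma prb_nonneg: "0 \<le> prb p F t" by (simp add: prb_def)

lemma fin_pair: "finite (range F) \<Longrightarrow> finite (range G) \<Longrightarrow> finite (range (\<lambda>\<omega>. (F \<omega>, G \<omega>)))"
  by (rule finite_subset[of _ "range F \<times> range G"]) auto

lemma fin_comp: "finite (range F) \<Longrightarrow> finite (range (\<lambda>\<omega>. g (F \<omega>)))"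
  by (metis image_image finite_imageI)

lemma prb_mono:
  assumes "\<And>\<omega>. G \<omega> = g (F \<omega>)"
  shows "prb p F t \<le> prb p G (g t)"
  unfolding prb_def pmf_map using assms by (intro measure_pmf.finite_measure_mono) auto

lemma prb_fact:
  assumes "map_pmf (\<lambda>\<omega>. (Z \<omega>, W \<omega>)) p = bind_pmf (map_pmf W p) (\<lambda>w. map_pmf (\<lambda>z. (z, w)) (\<mu> w))"
  shows "prb p (\<lambda>\<omega>. (Z \<omega>, W \<omega>)) (z, w) = prb p W w * pmf (\<mu> w) z"
proof -
  have e: "pmf (map_pmf (\<lambda>z. (z, w')) (\<mu> w')) (z, w) = pmf (\<mu> w) z * indicator {w} w'" for w'
  proof (cases "w' = w")
    case True
    have "(\<lambda>z'. (z', w)) -` {(z, w)} = {z}" by auto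
    then show ?thesis using True by (simp add: pmf_map measure_pmf_single)
  next
    case False
    then have "(\<lambda>z'. (z', w')) -` {(z, w)} = {}" by auto
    then show ?thesis using False by (simp add: pmf_map)
  qed
  show ?thesis
    unfolding prb_def assms pmf_bind e
    by (simp add: measure_pmf_single mult.commute)
qed

lemma hh_cond:
  assumes fZ: "finite (range Z)" and fU: "finite (range U)"
    and hyp: "\<And>z u. prb p (\<lambda>\<omega>. (Z \<omega>, U \<omega>)) (z, u) = prb p U u * k u z"
  shows "hh p (\<lambda>\<omega>. (Z \<omega>, U \<omega>)) = hh p U -
     (\<Sum>t\<in>range (\<lambda>\<omega>. (Z \<omega>, U \<omega>)). prb p (\<lambda>\<omega>. (Z \<omega>, U \<omega>)) t * log 2 (k (snd t) (fst t)))"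
proof -
  let ?J = "\<lambda>\<omega>. (Z \<omega>, U \<omega>)"
  have fJ: "finite (range ?J)" using fin_pair[OF fZ fU] .
  have tm: "prb p ?J t * log 2 (prb p ?J t) =
      prb p ?J t * log 2 (prb p U (snd t)) + prb p ?J t * log 2 (k (snd t) (fst t))" for t
  proof (cases "prb p ?J t = 0")
    case True then show ?thesis by simp
  next
    case False
    obtain z u where t: "t = (z, u)" by (cases t)
    have "prb p ?J t > 0" using False prb_nonneg[of p ?J t] by (simp add: less_le)
    then have pos: "prb p U u * k u z > 0"
      using hyp[of z u] unfolding t by simp
    have pU: "prb p U u > 0" using pos prb_nonneg[of p U u]
      by (metis less_eq_real_def mult_eq_0_iff)
    have pk: "k u z > 0" using pos pU by (simp add: zero_less_mult_iff)
    show ?thesis unfolding t using hyp[of z u] pU pk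
      by (simp add: log_mult distrib_left)
  qed
  have m: "(\<Sum>t\<in>range ?J. prb p ?J t * log 2 (prb p U (snd t))) = (\<Sum>u\<in>range U. prb p U u * log 2 (prb p U u))"
    using marg[OF fJ, of p "\<lambda>u. log 2 (prb p U u)" snd] by simp
  show ?thesis
    unfolding hh_def[of p ?J] hh_def[of p U] tm sum.distrib m by simp
qed

lemma hh_kernel:
  assumes fZ: "finite (range Z)" and fW: "finite (range W)"
    and fact: "map_pmf (\<lambda>\<omega>. (Z \<omega>, W \<omega>)) p =
        bind_pmf (map_pmf W p) (\<lambda>w. map_pmf (\<lambda>z. (z, w)) (\<kappa> (g w)))"
  shows "hh p (\<lambda>\<omega>. (Z \<omega>, W \<omega>)) - hh p W = hh p (\<lambda>\<omega>. (Z \<omega>, g (W \<omega>))) - hh p (\<lambda>\<omega>. g (W \<omega>))"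
proof -
  have fact2: "map_pmf (\<lambda>\<omega>. (Z \<omega>, g (W \<omega>))) p =
        bind_pmf (map_pmf (\<lambda>\<omega>. g (W \<omega>)) p) (\<lambda>u. map_pmf (\<lambda>z. (z, u)) (\<kappa> u))"
  proof -
    have "map_pmf (\<lambda>\<omega>. (Z \<omega>, g (W \<omega>))) p = map_pmf (\<lambda>(z, w). (z, g w)) (map_pmf (\<lambda>\<omega>. (Z \<omega>, W \<omega>)) p)"
      by (simp add: map_pmf_comp)
    also have "\<dots> = bind_pmf (map_pmf W p) (\<lambda>w. map_pmf (\<lambda>z. (z, g w)) (\<kappa> (g w)))"
      unfolding fact by (simp add: map_bind_pmf map_pmf_comp)
    also have "\<dots> = bind_pmf (map_pmf (\<lambda>\<omega>. g (W \<omega>)) p) (\<lambda>u. map_pmf (\<lambda>z. (z, u)) (\<kappa> u))"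
      by (simp add: bind_map_pmf)
    finally show ?thesis .
  qed
  have fgW: "finite (range (\<lambda>\<omega>. g (W \<omega>)))" using fin_comp[OF fW] .
  have e1: "hh p (\<lambda>\<omega>. (Z \<omega>, W \<omega>)) = hh p W -
     (\<Sum>t\<in>range (\<lambda>\<omega>. (Z \<omega>, W \<omega>)). prb p (\<lambda>\<omega>. (Z \<omega>, W \<omega>)) t * log 2 (pmf (\<kappa> (g (snd t))) (fst t)))"
    by (rule hh_cond[OF fZ fW]) (rule prb_fact[OF fact])
  have e2: "hh p (\<lambda>\<omega>. (Z \<omega>, g (W \<omega>))) = hh p (\<lambda>\<omega>. g (W \<omega>)) -
     (\<Sum>t\<in>range (\<lambda>\<omega>. (Z \<omega>, g (W \<omega>))). prb p (\<lambda>\<omega>. (Z \<omega>, g (W \<omega>))) t * log 2 (pmf (\<kappa> (snd t)) (fst t)))"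
    by (rule hh_cond[OF fZ fgW]) (rule prb_fact[OF fact2])
  have m: "(\<Sum>t\<in>range (\<lambda>\<omega>. (Z \<omega>, W \<omega>)). prb p (\<lambda>\<omega>. (Z \<omega>, W \<omega>)) t * log 2 (pmf (\<kappa> (g (snd t))) (fst t)))
     = (\<Sum>t\<in>range (\<lambda>\<omega>. (Z \<omega>, g (W \<omega>))). prb p (\<lambda>\<omega>. (Z \<omega>, g (W \<omega>))) t * log 2 (pmf (\<kappa> (snd t)) (fst t)))"
    using marg[OF fin_pair[OF fZ fW], of p "\<lambda>s. log 2 (pmf (\<kappa> (snd s)) (fst s))" "\<lambda>t. (fst t, g (snd t))"]
    by simp
  show ?thesis using e1 e2 m by simp
qed

lemma CMI_hh:
  fixes X :: "'o \<Rightarrow> 'x" and Y :: "'o \<Rightarrow> 'y" and Z :: "'o \<Rightarrow> 'z"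
  assumes fX: "finite (range X)" and fY: "finite (range Y)" and fZ: "finite (range Z)"
  shows "CMI p X Y Z = hh p (\<lambda>\<omega>. (X \<omega>, Z \<omega>)) + hh p (\<lambda>\<omega>. (Y \<omega>, Z \<omega>))
           - hh p (\<lambda>\<omega>. (X \<omega>, Y \<omega>, Z \<omega>)) - hh p Z"
proof -
  interpret information_space "measure_pmf p" 2 by standard simp
  have sd: "simple_distributed (measure_pmf p) F (prb p F)" if "finite (range F)" for F :: "_ \<Rightarrow> 'q"
    by (rule measure_pmf.simple_distributedI) (auto simp: sf_pmf that prb_nonneg prb_def pmf_map)
  let ?XZ = "\<lambda>\<omega>. (X \<omega>, Z \<omega>)" and ?YZ = "\<lambda>\<omega>. (Y \<omega>, Z \<omega>)" and ?XYZ = "\<lambda>\<omega>. (X \<omega>, Y \<omega>, Z \<omega>)"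
  have fXZ: "finite (range ?XZ)" and fYZ: "finite (range ?YZ)" and fXYZ: "finite (range ?XYZ)"
    using fX fY fZ by (auto intro!: fin_pair)
  have "CMI p X Y Z = (\<Sum>(x, y, z)\<in>range ?XYZ. prb p ?XYZ (x, y, z) *
      log 2 (prb p ?XYZ (x, y, z) / (prb p ?XZ (x, z) * (prb p ?YZ (y, z) / prb p Z z))))"
    unfolding CMI_def using conditional_mutual_information_eq[OF sd[OF fZ] sd[OF fYZ] sd[OF fXZ] sd[OF fXYZ]]
    by simp
  also have "\<dots> = (\<Sum>t\<in>range ?XYZ. prb p ?XYZ t * log 2 (prb p ?XYZ t))
       - (\<Sum>t\<in>range ?XYZ. prb p ?XYZ t * log 2 (prb p ?XZ (fst t, snd (snd t))))
       - (\<Sum>t\<in>range ?XYZ. prb p ?XYZ t * log 2 (prb p ?YZ (snd t)))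
       + (\<Sum>t\<in>range ?XYZ. prb p ?XYZ t * log 2 (prb p Z (snd (snd t))))"
    unfolding sum_subtractf[symmetric] sum.distrib[symmetric]
  proof (intro sum.cong refl, clarify)
    fix x :: 'x and y :: 'y and z :: 'z
    let ?t = "(x, y, z)"
    show "prb p ?XYZ (x, y, z) * log 2 (prb p ?XYZ (x, y, z) / (prb p ?XZ (x, z) * (prb p ?YZ (y, z) / prb p Z z))) =
      prb p ?XYZ ?t * log 2 (prb p ?XYZ ?t) - prb p ?XYZ ?t * log 2 (prb p ?XZ (fst ?t, snd (snd ?t))) -
      prb p ?XYZ ?t * log 2 (prb p ?YZ (snd ?t)) + prb p ?XYZ ?t * log 2 (prb p Z (snd (snd ?t)))"
    proof (cases "prb p ?XYZ ?t = 0")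
      case True then show ?thesis by simp
    next
      case False
      then have a: "prb p ?XYZ ?t > 0" using prb_nonneg[of p ?XYZ ?t] by (simp add: less_le)
      have b: "prb p ?XZ (x, z) > 0"
        using prb_mono[of ?XZ "\<lambda>t. (fst t, snd (snd t))" ?XYZ p ?t] a by simp
      have c: "prb p ?YZ (y, z) > 0"
        using prb_mono[of ?YZ "snd" ?XYZ p ?t] a by simp
      have d: "prb p Z z > 0"
        using prb_mono[of Z "\<lambda>t. snd (snd t)" ?XYZ p ?t] a by simp
      show ?thesis using a b c d by (simp add: log_divide log_mult algebra_simps)
    qed
  qed
  also have "\<dots> = hh p ?XZ + hh p ?YZ - hh p ?XYZ - hh p Z"
  proof -
    have m1: "(\<Sum>t\<in>range ?XYZ. prb p ?XYZ t * log 2 (prb p ?XZ (fst t, snd (snd t)))) = - hh p ?XZ"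
      using marg[OF fXYZ, of p "\<lambda>s. log 2 (prb p ?XZ s)" "\<lambda>t. (fst t, snd (snd t))"]
      by (simp add: hh_def)
    have m2: "(\<Sum>t\<in>range ?XYZ. prb p ?XYZ t * log 2 (prb p ?YZ (snd t))) = - hh p ?YZ"
      using marg[OF fXYZ, of p "\<lambda>s. log 2 (prb p ?YZ s)" "snd"]
      by (simp add: hh_def)
    have m3: "(\<Sum>t\<in>range ?XYZ. prb p ?XYZ t * log 2 (prb p Z (snd (snd t)))) = - hh p Z"
      using marg[OF fXYZ, of p "\<lambda>s. log 2 (prb p Z s)" "\<lambda>t. snd (snd t)"]
      by (simp add: hh_def)
    show ?thesis unfolding m1 m2 m3 by (simp add: hh_def)
  qed
  finally show ?thesis .
qed


lemma fin_Xs: "finite S \<Longrightarrow> finite (range (Xs S :: _ \<Rightarrow> nat \<Rightarrow> 'a::finite))"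
  by (rule finite_subset[of _ "PiE S (\<lambda>_. UNIV)"]) (auto simp: Xs_def restrict_PiE_iff intro: finite_PiE)
lemma fin_Ys: "finite S \<Longrightarrow> finite (range (Ys S :: _ \<Rightarrow> nat \<Rightarrow> 'b::finite))"
  by (rule finite_subset[of _ "PiE S (\<lambda>_. UNIV)"]) (auto simp: Ys_def restrict_PiE_iff intro: finite_PiE)
lemma fin_Yhs: "finite S \<Longrightarrow> finite (range (Yhs S :: _ \<Rightarrow> nat \<Rightarrow> 'c::finite))"
  by (rule finite_subset[of _ "PiE S (\<lambda>_. UNIV)"]) (auto simp: Yhs_def restrict_PiE_iff intro: finite_PiE)

lemma Pi_split:
  assumes "finite A" "T \<subseteq> A"
  shows "map_pmf (\<lambda>h. (restrict h T, restrict h (A - T))) (Pi_pmf A undefined q) =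
         pair_pmf (Pi_pmf T undefined q) (Pi_pmf (A - T) undefined q)"
proof -
  have fT: "finite T" by (rule finite_subset[OF assms(2) assms(1)])
  have fAT: "finite (A - T)" using assms by simp
  have A: "A = T \<union> (A - T)" using assms by blast
  have U: "Pi_pmf A undefined q = map_pmf (\<lambda>(f,g) x. if x \<in> T then f x else g x)
          (pair_pmf (Pi_pmf T undefined q) (Pi_pmf (A - T) undefined q))"
    using Pi_pmf_union[OF fT fAT, of undefined q] A by simp
  have M: "map_pmf (\<lambda>h. (restrict h T, restrict h (A - T))) (map_pmf (\<lambda>(f,g) x. if x \<in> T then f x else g x)
          (pair_pmf (Pi_pmf T undefined q) (Pi_pmf (A - T) undefined q))) =
     map_pmf (\<lambda>x. x) (pair_pmf (Pi_pmf T undefined q) (Pi_pmf (A - T) undefined q))"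
    unfolding map_pmf_comp
  proof (rule map_pmf_cong[OF refl])
    fix fg assume fg0: "fg \<in> set_pmf (pair_pmf (Pi_pmf T undefined q) (Pi_pmf (A - T) undefined q))"
    obtain f g where fg: "fg = (f, g)" by (cases fg)
    have f: "f \<in> set_pmf (Pi_pmf T undefined q)" and g: "g \<in> set_pmf (Pi_pmf (A - T) undefined q)"
      using fg0 unfolding fg set_pair_pmf by blast+
    show "(\<lambda>h. (restrict h T, restrict h (A - T))) (case fg of (f,g) \<Rightarrow> \<lambda>x. if x \<in> T then f x else g x) = fg"
    proof -
      have f': "f x = undefined" if xT: "x \<notin> T" for x
        using subsetD[OF set_Pi_pmf_subset[OF fT] f] xT by simp
      have g': "g x = undefined" if xT: "x \<notin> A - T" for x
        using subsetD[OF set_Pi_pmf_subset[OF fAT] g] xT by simp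
      have 1: "restrict (\<lambda>x. if x \<in> T then f x else g x) T = f"
      proof
        fix x show "restrict (\<lambda>x. if x \<in> T then f x else g x) T x = f x"
        proof (cases "x \<in> T")
          case False then show ?thesis using f'[OF False] by simp
        qed simp
      qed
      have 2: "restrict (\<lambda>x. if x \<in> T then f x else g x) (A - T) = g"
      proof
        fix x show "restrict (\<lambda>x. if x \<in> T then f x else g x) (A - T) x = g x"
        proof (cases "x \<in> A - T")
          case False then show ?thesis using g'[OF False] by simp
        qed simp
      qed
      show ?thesis unfolding fg using 1 2 by simp
    qed
  qed
  show ?thesis unfolding U M by simp
qed
lemma factA:
  fixes px :: "nat \<Rightarrow> 'a pmf" and W :: "(nat \<Rightarrow> 'a) \<Rightarrow> (nat \<Rightarrow> 'b) pmf"
    and Q :: "nat \<Rightarrow> 'b \<Rightarrow> 'c pmf"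
  assumes Tc: "Tc \<subseteq> {1..L}" and Wd: "\<And>x y h. Wv (x, y, h) = \<phi> x y"
    and gd: "\<And>x y. g (\<phi> x y) = restrict y Tc"
  shows "map_pmf (\<lambda>\<omega>. (Yhs Tc \<omega>, Wv \<omega>)) (jd_pmf K L px W Q) =
     bind_pmf (map_pmf Wv (jd_pmf K L px W Q))
       (\<lambda>w. map_pmf (\<lambda>z. (z, w)) ((\<lambda>v. Pi_pmf Tc undefined (\<lambda>l. Q l (v l))) (g w)))"
proof -
  have sub: "map_pmf (\<lambda>h. restrict h Tc) (Pi_pmf {1..L} undefined (\<lambda>l. Q l (y l))) =
      Pi_pmf Tc undefined (\<lambda>l. Q l (y l))" for y
    using Pi_pmf_subset[OF finite_atLeastAtMost Tc, of undefined "\<lambda>l. Q l (y l)"]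
    by (simp add: restrict_def[abs_def])
  have cong: "Pi_pmf Tc undefined (\<lambda>l. Q l (restrict y Tc l)) = Pi_pmf Tc undefined (\<lambda>l. Q l (y l))" for y
    by (rule Pi_pmf_cong) auto
  have inner: "bind_pmf (Pi_pmf {1..L} undefined (\<lambda>l. Q l (y l))) (\<lambda>h. return_pmf (restrict h Tc, \<phi> x y))
     = map_pmf (\<lambda>z. (z, \<phi> x y)) (Pi_pmf Tc undefined (\<lambda>l. Q l (y l)))" for x y
    unfolding sub[symmetric] map_pmf_comp by (simp add: map_pmf_def)
  show ?thesis
    by (simp add: jd_pmf_def map_bind_pmf bind_assoc_pmf bind_return_pmf Yhs_def Wd gd inner[simplified] cong[simplified] bind_map_pmf)
qed

lemma factB:
  fixes px :: "nat \<Rightarrow> 'a pmf" and W :: "(nat \<Rightarrow> 'a) \<Rightarrow> (nat \<Rightarrow> 'b) pmf"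
    and Q :: "nat \<Rightarrow> 'b \<Rightarrow> 'c pmf"
  assumes T: "T \<subseteq> {1..L}" and Wd: "\<And>x y h. Wv (x, y, h) = (\<phi> x y, restrict h ({1..L} - T))"
    and gd: "\<And>x y b. g (\<phi> x y, b) = restrict y T"
  shows "map_pmf (\<lambda>\<omega>. (Yhs T \<omega>, Wv \<omega>)) (jd_pmf K L px W Q) =
     bind_pmf (map_pmf Wv (jd_pmf K L px W Q))
       (\<lambda>w. map_pmf (\<lambda>z. (z, w)) ((\<lambda>v. Pi_pmf T undefined (\<lambda>l. Q l (v l))) (g w)))"
proof -
  define PT where "PT y = Pi_pmf T undefined (\<lambda>l. Q l (y l))" for y :: "nat \<Rightarrow> 'b"
  define PTc where "PTc y = Pi_pmf ({1..L} - T) undefined (\<lambda>l. Q l (y l))" for y :: "nat \<Rightarrow> 'b"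
  define PL where "PL y = Pi_pmf {1..L} undefined (\<lambda>l. Q l (y l))" for y :: "nat \<Rightarrow> 'b"
  have split: "map_pmf (\<lambda>h. (restrict h T, restrict h ({1..L} - T))) (PL y) = pair_pmf (PT y) (PTc y)" for y
    unfolding PL_def PT_def PTc_def by (rule Pi_split[OF finite_atLeastAtMost T])
  have subc: "map_pmf (\<lambda>h. restrict h ({1..L} - T)) (PL y) = PTc y" for y
  proof -
    have "map_pmf (\<lambda>h. restrict h ({1..L} - T)) (PL y) = map_pmf snd (map_pmf (\<lambda>h. (restrict h T, restrict h ({1..L} - T))) (PL y))"
      by (simp add: map_pmf_comp)
    also have "\<dots> = PTc y" unfolding split by (simp add: map_snd_pair_pmf)
    finally show ?thesis .
  qed
  have cong: "Pi_pmf T undefined (\<lambda>l. Q l (restrict y T l)) = PT y" for y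
    unfolding PT_def by (rule Pi_pmf_cong) auto
  have innerL: "bind_pmf (PL y) (\<lambda>h. return_pmf (restrict h T, (\<phi> x y, restrict h ({1..L} - T))))
     = bind_pmf (PTc y) (\<lambda>b. map_pmf (\<lambda>z. (z, (\<phi> x y, b))) (PT y))" for x y
  proof -
    have "bind_pmf (PL y) (\<lambda>h. return_pmf (restrict h T, (\<phi> x y, restrict h ({1..L} - T))))
       = map_pmf (\<lambda>(a, b). (a, (\<phi> x y, b))) (map_pmf (\<lambda>h. (restrict h T, restrict h ({1..L} - T))) (PL y))"
      by (simp add: map_pmf_comp map_pmf_def bind_assoc_pmf bind_return_pmf)
    also have "\<dots> = bind_pmf (PT y) (\<lambda>a. bind_pmf (PTc y) (\<lambda>b. return_pmf (a, (\<phi> x y, b))))"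
      unfolding split pair_pmf_def by (simp add: map_bind_pmf)
    also have "\<dots> = bind_pmf (PTc y) (\<lambda>b. bind_pmf (PT y) (\<lambda>a. return_pmf (a, (\<phi> x y, b))))"
      by (rule bind_commute_pmf)
    finally show ?thesis by (simp add: map_pmf_def)
  qed
  have innerR: "bind_pmf (PL y) (\<lambda>h. map_pmf (\<lambda>z. (z, (\<phi> x y, restrict h ({1..L} - T)))) (PT y))
     = bind_pmf (PTc y) (\<lambda>b. map_pmf (\<lambda>z. (z, (\<phi> x y, b))) (PT y))" for x y
    unfolding subc[symmetric] by (simp add: bind_map_pmf)
  have "map_pmf (\<lambda>\<omega>. (Yhs T \<omega>, Wv \<omega>)) (jd_pmf K L px W Q) =
     bind_pmf (Pi_pmf {1..K} undefined px) (\<lambda>x. bind_pmf (W x) (\<lambda>y.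
       bind_pmf (PL y) (\<lambda>h. return_pmf (restrict h T, (\<phi> x y, restrict h ({1..L} - T))))))"
    unfolding jd_pmf_def PL_def by (simp add: map_bind_pmf Yhs_def Wd)
  also have "\<dots> = bind_pmf (Pi_pmf {1..K} undefined px) (\<lambda>x. bind_pmf (W x) (\<lambda>y.
       bind_pmf (PL y) (\<lambda>h. map_pmf (\<lambda>z. (z, (\<phi> x y, restrict h ({1..L} - T)))) (PT y))))"
    unfolding innerL innerR ..
  also have "\<dots> = bind_pmf (map_pmf Wv (jd_pmf K L px W Q))
       (\<lambda>w. map_pmf (\<lambda>z. (z, w)) ((\<lambda>v. Pi_pmf T undefined (\<lambda>l. Q l (v l))) (g w)))"
    unfolding jd_pmf_def PL_def
    by (simp add: map_bind_pmf bind_assoc_pmf bind_return_pmf bind_map_pmf Wd gd cong[simplified])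
  finally show ?thesis .
qed



lemma CMI_nonneg:
  assumes "finite (range X)" "finite (range Y)" "finite (range Z)"
  shows "0 \<le> CMI p X Y Z"
proof -
  interpret information_space "measure_pmf p" 2 by standard simp
  show ?thesis unfolding CMI_def
    using conditional_mutual_information_nonneg[OF sf_pmf[OF assms(1)] sf_pmf[OF assms(2)] sf_pmf[OF assms(3)]]
    by simp
qed

lemma CMI_const1:
  assumes "finite (range Y)" "finite (range Z)" "\<And>\<omega>. X \<omega> = c"
  shows "CMI p X Y Z = 0"
proof -
  have fX: "finite (range X)" proof -
    have "range X = {c}" using assms(3) by auto
    then show ?thesis by simp
  qed
  have "hh p (\<lambda>\<omega>. (X \<omega>, Z \<omega>)) = hh p Z"
    by (rule hh_inv[where f="\<lambda>z. (c, z)" and g=snd]) (simp_all add: assms(3))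
  moreover have "hh p (\<lambda>\<omega>. (X \<omega>, Y \<omega>, Z \<omega>)) = hh p (\<lambda>\<omega>. (Y \<omega>, Z \<omega>))"
    by (rule hh_inv[where f="\<lambda>z. (c, z)" and g=snd]) (simp_all add: assms(3))
  ultimately show ?thesis using CMI_hh[OF fX assms(1,2)] by simp
qed

lemma CMI_const2:
  assumes "finite (range X)" "finite (range Z)" "\<And>\<omega>. Y \<omega> = c"
  shows "CMI p X Y Z = 0"
proof -
  have fY: "finite (range Y)" proof -
    have "range Y = {c}" using assms(3) by auto
    then show ?thesis by simp
  qed
  have "hh p (\<lambda>\<omega>. (Y \<omega>, Z \<omega>)) = hh p Z"
    by (rule hh_inv[where f="\<lambda>z. (c, z)" and g=snd]) (simp_all add: assms(3))
  moreover have "hh p (\<lambda>\<omega>. (X \<omega>, Y \<omega>, Z \<omega>)) = hh p (\<lambda>\<omega>. (X \<omega>, Z \<omega>))"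
    by (rule hh_inv[where f="\<lambda>(x, z). (x, c, z)" and g="\<lambda>(x, y, z). (x, z)"]) (simp_all add: assms(3))
  ultimately show ?thesis using CMI_hh[OF assms(1) fY assms(2)] by simp
qed

lemma rempty: "restrict f {} = (\<lambda>_. undefined)"
  by (rule ext) simp

lemma rr: "B \<subseteq> A \<Longrightarrow> restrict (restrict f A) B = restrict f B"
  unfolding restrict_def by (rule ext) auto

lemma merge_restrict: "T \<subseteq> A \<Longrightarrow> (\<lambda>i. if i \<in> T then restrict h T i else restrict h (A - T) i) = restrict h A"
  unfolding restrict_def by (rule ext) auto

lemma upper:
  fixes px :: "nat \<Rightarrow> 'a::finite pmf" and W :: "(nat \<Rightarrow> 'a) \<Rightarrow> (nat \<Rightarrow> 'b::finite) pmf"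
    and Q :: "nat \<Rightarrow> 'b \<Rightarrow> 'c::finite pmf"
  assumes Ssub: "S \<subseteq> {1..K}" and Tsub: "T \<subseteq> {1..L}"
    and hyp1: "sum C ({1..L} - T) - sum R ({1..K} - S) \<ge>
      CMI (jd_pmf K L px W Q) (Ys ({1..L} - T)) (Yhs ({1..L} - T)) (Xs {1..K})
      - CMI (jd_pmf K L px W Q) (Xs ({1..K} - S)) (Yhs T) (Xs S)"
    and hyp2: "sum C {1..L} - sum R {1..K} = CMI (jd_pmf K L px W Q) (Ys {1..L}) (Yhs {1..L}) (Xs {1..K})"
  shows "sum C T - sum R S \<le> CMI (jd_pmf K L px W Q) (Ys T) (Yhs T) (Xs S)"
proof -
  define p where "p = jd_pmf K L px W Q"
  define Tc where "Tc = {1..L} - T"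
  define Sc where "Sc = {1..K} - S"
  define A :: "(nat \<Rightarrow> 'a) \<times> (nat \<Rightarrow> 'b) \<times> (nat \<Rightarrow> 'c) \<Rightarrow> nat \<Rightarrow> 'a" where "A = Xs {1..K}"
  define XS :: "(nat \<Rightarrow> 'a) \<times> (nat \<Rightarrow> 'b) \<times> (nat \<Rightarrow> 'c) \<Rightarrow> nat \<Rightarrow> 'a" where "XS = Xs S"
  define XSc :: "(nat \<Rightarrow> 'a) \<times> (nat \<Rightarrow> 'b) \<times> (nat \<Rightarrow> 'c) \<Rightarrow> nat \<Rightarrow> 'a" where "XSc = Xs Sc"
  define Y :: "(nat \<Rightarrow> 'a) \<times> (nat \<Rightarrow> 'b) \<times> (nat \<Rightarrow> 'c) \<Rightarrow> nat \<Rightarrow> 'b" where "Y = Ys {1..L}"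
  define V :: "(nat \<Rightarrow> 'a) \<times> (nat \<Rightarrow> 'b) \<times> (nat \<Rightarrow> 'c) \<Rightarrow> nat \<Rightarrow> 'b" where "V = Ys T"
  define V' :: "(nat \<Rightarrow> 'a) \<times> (nat \<Rightarrow> 'b) \<times> (nat \<Rightarrow> 'c) \<Rightarrow> nat \<Rightarrow> 'b" where "V' = Ys Tc"
  define Zl :: "(nat \<Rightarrow> 'a) \<times> (nat \<Rightarrow> 'b) \<times> (nat \<Rightarrow> 'c) \<Rightarrow> nat \<Rightarrow> 'c" where "Zl = Yhs {1..L}"
  define Z :: "(nat \<Rightarrow> 'a) \<times> (nat \<Rightarrow> 'b) \<times> (nat \<Rightarrow> 'c) \<Rightarrow> nat \<Rightarrow> 'c" where "Z = Yhs T"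
  define Z' :: "(nat \<Rightarrow> 'a) \<times> (nat \<Rightarrow> 'b) \<times> (nat \<Rightarrow> 'c) \<Rightarrow> nat \<Rightarrow> 'c" where "Z' = Yhs Tc"
  have Tc_sub: "Tc \<subseteq> {1..L}" unfolding Tc_def by auto
  have TcI: "{Suc 0..L} \<inter> Tc = Tc" using Tc_sub by auto
  have TI: "{Suc 0..L} \<inter> T = T" using Tsub by auto
  have TcI2: "Tc \<inter> {Suc 0..L} = Tc" using Tc_sub by auto
  have TI2: "T \<inter> {Suc 0..L} = T" using Tsub by auto
  have fS: "finite S" by (rule finite_subset[OF Ssub]) simp
  have fT: "finite T" by (rule finite_subset[OF Tsub]) simp
  have fSc: "finite Sc" unfolding Sc_def by simp
  have fTc: "finite Tc" unfolding Tc_def by simp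
  have fA: "finite (range A)" unfolding A_def by (rule fin_Xs) simp
  have fXS: "finite (range XS)" unfolding XS_def by (rule fin_Xs[OF fS])
  have fXSc: "finite (range XSc)" unfolding XSc_def by (rule fin_Xs[OF fSc])
  have fY: "finite (range Y)" unfolding Y_def by (rule fin_Ys) simp
  have fV: "finite (range V)" unfolding V_def by (rule fin_Ys[OF fT])
  have fV': "finite (range V')" unfolding V'_def by (rule fin_Ys[OF fTc])
  have fZl: "finite (range Zl)" unfolding Zl_def by (rule fin_Yhs) simp
  have fZ: "finite (range Z)" unfolding Z_def by (rule fin_Yhs[OF fT])
  have fZ': "finite (range Z')" unfolding Z'_def by (rule fin_Yhs[OF fTc])
  note fins = fA fXS fXSc fY fV fV' fZl fZ fZ'
  have c1: "CMI p Y Zl A = hh p (\<lambda>\<omega>. (Y \<omega>, A \<omega>)) + hh p (\<lambda>\<omega>. (Zl \<omega>, A \<omega>)) - hh p (\<lambda>\<omega>. (Y \<omega>, Zl \<omega>, A \<omega>)) - hh p A"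
    by (rule CMI_hh) (rule fins)+
  have c2: "CMI p V' Z' A = hh p (\<lambda>\<omega>. (V' \<omega>, A \<omega>)) + hh p (\<lambda>\<omega>. (Z' \<omega>, A \<omega>)) - hh p (\<lambda>\<omega>. (V' \<omega>, Z' \<omega>, A \<omega>)) - hh p A"
    by (rule CMI_hh) (rule fins)+
  have c3: "CMI p XSc Z XS = hh p (\<lambda>\<omega>. (XSc \<omega>, XS \<omega>)) + hh p (\<lambda>\<omega>. (Z \<omega>, XS \<omega>)) - hh p (\<lambda>\<omega>. (XSc \<omega>, Z \<omega>, XS \<omega>)) - hh p XS"
    by (rule CMI_hh) (rule fins)+
  have c4: "CMI p V Z XS = hh p (\<lambda>\<omega>. (V \<omega>, XS \<omega>)) + hh p (\<lambda>\<omega>. (Z \<omega>, XS \<omega>)) - hh p (\<lambda>\<omega>. (V \<omega>, Z \<omega>, XS \<omega>)) - hh p XS"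
    by (rule CMI_hh) (rule fins)+
  have g1: "0 \<le> hh p (\<lambda>\<omega>. (Z \<omega>, A \<omega>)) + hh p (\<lambda>\<omega>. (Z' \<omega>, A \<omega>)) - hh p (\<lambda>\<omega>. (Z \<omega>, Z' \<omega>, A \<omega>)) - hh p A"
    using CMI_nonneg[OF fZ fZ' fA, of p] CMI_hh[OF fZ fZ' fA, of p] by simp
  have g2: "0 \<le> hh p (\<lambda>\<omega>. (Z \<omega>, V \<omega>)) + hh p (\<lambda>\<omega>. (XS \<omega>, V \<omega>)) - hh p (\<lambda>\<omega>. (Z \<omega>, XS \<omega>, V \<omega>)) - hh p V"
    using CMI_nonneg[OF fZ fXS fV, of p] CMI_hh[OF fZ fXS fV, of p] by simp
  have m1a: "hh p (\<lambda>\<omega>. (Z' \<omega>, (Y \<omega>, A \<omega>))) - hh p (\<lambda>\<omega>. (Y \<omega>, A \<omega>)) = hh p (\<lambda>\<omega>. (Z' \<omega>, V' \<omega>)) - hh p V'"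
  proof -
    have fact: "map_pmf (\<lambda>\<omega>. (Z' \<omega>, (Y \<omega>, A \<omega>))) p = bind_pmf (map_pmf (\<lambda>\<omega>. (Y \<omega>, A \<omega>)) p)
       (\<lambda>w. map_pmf (\<lambda>z. (z, w)) ((\<lambda>v. Pi_pmf Tc undefined (\<lambda>l. Q l (v l))) ((\<lambda>(y, a). restrict y Tc) w)))"
      unfolding p_def Z'_def
    proof (rule factA[OF Tc_sub, where \<phi>="\<lambda>x y. (restrict y {1..L}, restrict x {1..K})"])
      show "(Y (x, y, h), A (x, y, h)) = (restrict y {1..L}, restrict x {1..K})" for x y h
        by (simp add: Y_def A_def Ys_def Xs_def)
      show "(\<lambda>(y, a). restrict y Tc) (restrict y {1..L}, restrict x {1..K}) = restrict y Tc" for x :: "nat \<Rightarrow> 'a" and y :: "nat \<Rightarrow> 'b"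
        by (simp only: prod.case rr[OF Tc_sub] TcI TcI2)
    qed
    have e: "(\<lambda>\<omega>. (\<lambda>(y, a). restrict y Tc) (Y \<omega>, A \<omega>)) = V'"
      by (rule ext) (simp add: Y_def V'_def Ys_def rr[OF Tc_sub] TcI TcI2)
    have e2: "restrict (Y \<omega>) Tc = V' \<omega>" for \<omega>
      by (simp add: Y_def V'_def Ys_def TcI TcI2)
    show ?thesis
      using hh_kernel[where Z=Z' and W="\<lambda>\<omega>. (Y \<omega>, A \<omega>)" and p=p and \<kappa>="\<lambda>v. Pi_pmf Tc undefined (\<lambda>l. Q l (v l))" and g="\<lambda>(y, a). restrict y Tc", OF fZ' fin_pair[OF fY fA] fact]
      unfolding e by (simp add: e2)
  qed
  have m1b: "hh p (\<lambda>\<omega>. (Z' \<omega>, (V' \<omega>, A \<omega>))) - hh p (\<lambda>\<omega>. (V' \<omega>, A \<omega>)) = hh p (\<lambda>\<omega>. (Z' \<omega>, V' \<omega>)) - hh p V'"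
  proof -
    have fact: "map_pmf (\<lambda>\<omega>. (Z' \<omega>, (V' \<omega>, A \<omega>))) p = bind_pmf (map_pmf (\<lambda>\<omega>. (V' \<omega>, A \<omega>)) p)
       (\<lambda>w. map_pmf (\<lambda>z. (z, w)) ((\<lambda>v. Pi_pmf Tc undefined (\<lambda>l. Q l (v l))) (fst w)))"
      unfolding p_def Z'_def
    proof (rule factA[OF Tc_sub, where \<phi>="\<lambda>x y. (restrict y Tc, restrict x {1..K})"])
      show "(V' (x, y, h), A (x, y, h)) = (restrict y Tc, restrict x {1..K})" for x y h
        by (simp add: V'_def A_def Ys_def Xs_def)
      show "fst (restrict y Tc, restrict x {1..K}) = restrict y Tc" for x :: "nat \<Rightarrow> 'a" and y :: "nat \<Rightarrow> 'b"
        by (simp only: fst_conv)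
    qed
    have e: "(\<lambda>\<omega>. fst (V' \<omega>, A \<omega>)) = V'" by simp
    show ?thesis
      using hh_kernel[where Z=Z' and W="\<lambda>\<omega>. (V' \<omega>, A \<omega>)" and p=p and \<kappa>="\<lambda>v. Pi_pmf Tc undefined (\<lambda>l. Q l (v l))" and g=fst, OF fZ' fin_pair[OF fV' fA] fact]
      unfolding e by simp
  qed
  have m2: "hh p (\<lambda>\<omega>. (Z \<omega>, ((Y \<omega>, A \<omega>), Z' \<omega>))) - hh p (\<lambda>\<omega>. ((Y \<omega>, A \<omega>), Z' \<omega>)) = hh p (\<lambda>\<omega>. (Z \<omega>, V \<omega>)) - hh p V"
  proof -
    have fact: "map_pmf (\<lambda>\<omega>. (Z \<omega>, ((Y \<omega>, A \<omega>), Z' \<omega>))) p = bind_pmf (map_pmf (\<lambda>\<omega>. ((Y \<omega>, A \<omega>), Z' \<omega>)) p)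
       (\<lambda>w. map_pmf (\<lambda>z. (z, w)) ((\<lambda>v. Pi_pmf T undefined (\<lambda>l. Q l (v l))) ((\<lambda>((y, a), b). restrict y T) w)))"
      unfolding p_def Z_def
    proof (rule factB[OF Tsub, where \<phi>="\<lambda>x y. (restrict y {1..L}, restrict x {1..K})"])
      show "((Y (x, y, h), A (x, y, h)), Z' (x, y, h)) = ((restrict y {1..L}, restrict x {1..K}), restrict h ({1..L} - T))" for x y h
        by (simp add: Y_def A_def Z'_def Tc_def Ys_def Xs_def Yhs_def)
      show "(\<lambda>((y, a), b). restrict y T) ((restrict y {1..L}, restrict x {1..K}), b) = restrict y T"
        for x :: "nat \<Rightarrow> 'a" and y :: "nat \<Rightarrow> 'b" and b :: "nat \<Rightarrow> 'c"
        by (simp only: prod.case rr[OF Tsub])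
    qed
    have e: "(\<lambda>\<omega>. (\<lambda>((y, a), b). restrict y T) ((Y \<omega>, A \<omega>), Z' \<omega>)) = V"
      by (rule ext) (simp add: Y_def V_def Ys_def rr[OF Tsub] TI TI2)
    have e2: "restrict (Y \<omega>) T = V \<omega>" for \<omega>
      by (simp add: Y_def V_def Ys_def TI TI2)
    show ?thesis
      using hh_kernel[where Z=Z and W="\<lambda>\<omega>. ((Y \<omega>, A \<omega>), Z' \<omega>)" and p=p and \<kappa>="\<lambda>v. Pi_pmf T undefined (\<lambda>l. Q l (v l))" and g="\<lambda>((y, a), b). restrict y T", OF fZ fin_pair[OF fin_pair[OF fY fA] fZ'] fact]
      unfolding e by (simp add: e2)
  qed
  have ScK: "Sc \<subseteq> {1..K}" unfolding Sc_def by auto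
  have i1: "hh p (\<lambda>\<omega>. (Y \<omega>, Zl \<omega>, A \<omega>)) = hh p (\<lambda>\<omega>. (Z \<omega>, ((Y \<omega>, A \<omega>), Z' \<omega>)))"
    by (rule hh_inv[where f="\<lambda>(z, ((y, a), z')). (y, (\<lambda>i. if i \<in> T then z i else z' i), a)"
          and g="\<lambda>(y, zl, a). (restrict zl T, ((y, a), restrict zl Tc))"])
       (simp only: prod.case Zl_def Z_def Z'_def Yhs_def Tc_def merge_restrict[OF Tsub] rr[OF Tsub] rr[OF Tc_sub[unfolded Tc_def]])+
  have i2: "hh p (\<lambda>\<omega>. (Zl \<omega>, A \<omega>)) = hh p (\<lambda>\<omega>. (Z \<omega>, Z' \<omega>, A \<omega>))"
    by (rule hh_inv[where f="\<lambda>(z, z', a). ((\<lambda>i. if i \<in> T then z i else z' i), a)"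
          and g="\<lambda>(zl, a). (restrict zl T, restrict zl Tc, a)"])
       (simp only: prod.case Zl_def Z_def Z'_def Yhs_def Tc_def merge_restrict[OF Tsub] rr[OF Tsub] rr[OF Tc_sub[unfolded Tc_def]])+
  have i3: "hh p (\<lambda>\<omega>. (Z' \<omega>, (Y \<omega>, A \<omega>))) = hh p (\<lambda>\<omega>. ((Y \<omega>, A \<omega>), Z' \<omega>))"
    by (rule hh_inv[where f="\<lambda>(w, z'). (z', w)" and g="\<lambda>(z', w). (w, z')"]) simp_all
  have i4: "hh p (\<lambda>\<omega>. (V' \<omega>, Z' \<omega>, A \<omega>)) = hh p (\<lambda>\<omega>. (Z' \<omega>, (V' \<omega>, A \<omega>)))"
    by (rule hh_inv[where f="\<lambda>(z', (v', a)). (v', z', a)" and g="\<lambda>(v', z', a). (z', (v', a))"]) simp_all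
  have i5: "hh p (\<lambda>\<omega>. (XSc \<omega>, XS \<omega>)) = hh p A"
    by (rule hh_inv[where f="\<lambda>a. (restrict a Sc, restrict a S)" and g="\<lambda>(b, c). (\<lambda>i. if i \<in> S then c i else b i)"])
       (simp only: prod.case A_def XS_def XSc_def Xs_def Sc_def merge_restrict[OF Ssub] rr[OF Ssub] rr[OF ScK[unfolded Sc_def]])+
  have i6: "hh p (\<lambda>\<omega>. (XSc \<omega>, Z \<omega>, XS \<omega>)) = hh p (\<lambda>\<omega>. (Z \<omega>, A \<omega>))"
    by (rule hh_inv[where f="\<lambda>(z, a). (restrict a Sc, z, restrict a S)" and g="\<lambda>(b, z, c). (z, (\<lambda>i. if i \<in> S then c i else b i))"])
       (simp only: prod.case A_def XS_def XSc_def Xs_def Sc_def merge_restrict[OF Ssub] rr[OF Ssub] rr[OF ScK[unfolded Sc_def]])+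
  have i7: "hh p (\<lambda>\<omega>. (V \<omega>, XS \<omega>)) = hh p (\<lambda>\<omega>. (XS \<omega>, V \<omega>))"
    by (rule hh_inv[where f="\<lambda>(a, b). (b, a)" and g="\<lambda>(a, b). (b, a)"]) simp_all
  have i8: "hh p (\<lambda>\<omega>. (V \<omega>, Z \<omega>, XS \<omega>)) = hh p (\<lambda>\<omega>. (Z \<omega>, XS \<omega>, V \<omega>))"
    by (rule hh_inv[where f="\<lambda>(z, xs, v). (v, z, xs)" and g="\<lambda>(v, z, xs). (z, xs, v)"]) simp_all
  have h1: "sum C Tc - sum R Sc \<ge> CMI p V' Z' A - CMI p XSc Z XS"
  proof -
    have a: "{1..L} - Tc = T" unfolding Tc_def using Tsub by auto
    have b: "{1..K} - Sc = S" unfolding Sc_def using Ssub by auto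
    show ?thesis using hyp1 unfolding p_def V'_def Z'_def A_def XSc_def Z_def XS_def Tc_def[symmetric] Sc_def[symmetric] .
  qed
  have h2: "sum C {1..L} - sum R {1..K} = CMI p Y Zl A"
    using hyp2 unfolding p_def Y_def Zl_def A_def .
  have sC: "sum C {1..L} = sum C Tc + sum C T"
    unfolding Tc_def by (rule sum.subset_diff[OF Tsub finite_atLeastAtMost])
  have sR: "sum R {1..K} = sum R Sc + sum R S"
    unfolding Sc_def by (rule sum.subset_diff[OF Ssub finite_atLeastAtMost])
  have "sum C T - sum R S \<le> CMI p V Z XS"
    using c1 c2 c3 c4 g1 g2 m1a m1b m2 i1 i2 i3 i4 i5 i6 i7 i8 h1 h2 sC sR by linarith
  then show ?thesis unfolding p_def V_def Z_def XS_def .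
qed

theorem lemma3:
  fixes K L :: nat
    and px :: "nat \<Rightarrow> 'a::finite pmf"
    and W :: "(nat \<Rightarrow> 'a) \<Rightarrow> (nat \<Rightarrow> 'b::finite) pmf"
    and Q :: "nat \<Rightarrow> 'b \<Rightarrow> 'c::finite pmf"
  assumes "1 \<le> K" and "1 \<le> L"
  shows "dominant_face K L (jd_pmf K L px W Q) =
    {(R, C). \<forall>S\<subseteq>{1..K}. \<forall>T\<subseteq>{1..L}.
       CMI (jd_pmf K L px W Q) (Ys T) (Yhs T) (Xs {1..K})
         - CMI (jd_pmf K L px W Q) (Xs S) (Yhs ({1..L} - T)) (Xs ({1..K} - S))
       \<le> sum C T - sum R S \<and>
       sum C T - sum R S \<le> CMI (jd_pmf K L px W Q) (Ys T) (Yhs T) (Xs S)}"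
proof -
  let ?p = "jd_pmf K L px W Q"
  have fXs: "finite S \<Longrightarrow> finite (range (Xs S :: (nat \<Rightarrow> 'a) \<times> (nat \<Rightarrow> 'b) \<times> (nat \<Rightarrow> 'c) \<Rightarrow> _))" for S
    by (rule fin_Xs)
  have fYs: "finite S \<Longrightarrow> finite (range (Ys S :: (nat \<Rightarrow> 'a) \<times> (nat \<Rightarrow> 'b) \<times> (nat \<Rightarrow> 'c) \<Rightarrow> _))" for S
    by (rule fin_Ys)
  have fYhs: "finite S \<Longrightarrow> finite (range (Yhs S :: (nat \<Rightarrow> 'a) \<times> (nat \<Rightarrow> 'b) \<times> (nat \<Rightarrow> 'c) \<Rightarrow> _))" for S
    by (rule fin_Yhs)
  have fwd: "(\<forall>S\<subseteq>{1..K}. \<forall>T\<subseteq>{1..L}.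
       CMI ?p (Ys T) (Yhs T) (Xs {1..K}) - CMI ?p (Xs S) (Yhs ({1..L} - T)) (Xs ({1..K} - S))
       \<le> sum C T - sum R S \<and> sum C T - sum R S \<le> CMI ?p (Ys T) (Yhs T) (Xs S))"
    if D: "(R, C) \<in> dominant_face K L ?p" for R C
  proof (intro allI impI conjI)
    have Rjd: "\<And>S T. S \<subseteq> {1..K} \<Longrightarrow> T \<subseteq> {1..L} \<Longrightarrow> sum C T - sum R S \<ge>
          CMI ?p (Ys T) (Yhs T) (Xs {1..K}) - CMI ?p (Xs S) (Yhs ({1..L} - T)) (Xs ({1..K} - S))"
      and eq: "sum C {1..L} - sum R {1..K} = CMI ?p (Ys {1..L}) (Yhs {1..L}) (Xs {1..K})"
      using D unfolding dominant_face_def R_JD_def by auto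
    fix S T assume S: "S \<subseteq> {1..K}" and T: "T \<subseteq> {1..L}"
    show "CMI ?p (Ys T) (Yhs T) (Xs {1..K}) - CMI ?p (Xs S) (Yhs ({1..L} - T)) (Xs ({1..K} - S)) \<le> sum C T - sum R S"
      using Rjd[OF S T] by simp
    have dT: "{1..L} - ({1..L} - T) = T" using T by auto
    have dS: "{1..K} - ({1..K} - S) = S" using S by auto
    have h1: "sum C ({1..L} - T) - sum R ({1..K} - S) \<ge>
      CMI ?p (Ys ({1..L} - T)) (Yhs ({1..L} - T)) (Xs {1..K})
      - CMI ?p (Xs ({1..K} - S)) (Yhs T) (Xs S)"
      using Rjd[of "{1..K} - S" "{1..L} - T"] unfolding dT dS by auto
    show "sum C T - sum R S \<le> CMI ?p (Ys T) (Yhs T) (Xs S)"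
      by (rule upper[OF S T h1 eq])
  qed
  have bwd: "(R, C) \<in> dominant_face K L ?p"
    if H: "\<forall>S\<subseteq>{1..K}. \<forall>T\<subseteq>{1..L}.
       CMI ?p (Ys T) (Yhs T) (Xs {1..K}) - CMI ?p (Xs S) (Yhs ({1..L} - T)) (Xs ({1..K} - S))
       \<le> sum C T - sum R S \<and> sum C T - sum R S \<le> CMI ?p (Ys T) (Yhs T) (Xs S)" for R C
  proof -
    have Rnn: "0 \<le> R k" if k: "k \<in> {1..K}" for k
    proof -
      have "sum C {} - sum R {k} \<le> CMI ?p (Ys {}) (Yhs {}) (Xs {k})"
        using H[rule_format, of "{k}" "{}"] k by auto
      moreover have "CMI ?p (Ys {}) (Yhs {}) (Xs {k}) = 0"
        by (rule CMI_const1[where c="\<lambda>_. undefined"]) (rule fYhs, simp, rule fXs, simp, simp add: Ys_def rempty)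
      ultimately show ?thesis by simp
    qed
    have Cnn: "0 \<le> C l" if l: "l \<in> {1..L}" for l
    proof -
      have "CMI ?p (Ys {l}) (Yhs {l}) (Xs {1..K}) - CMI ?p (Xs {}) (Yhs ({1..L} - {l})) (Xs ({1..K} - {}))
          \<le> sum C {l} - sum R {}"
        using H[rule_format, of "{}" "{l}"] l by auto
      moreover have "CMI ?p (Xs {}) (Yhs ({1..L} - {l})) (Xs ({1..K} - {})) = 0"
        by (rule CMI_const1[where c="\<lambda>_. undefined"]) (rule fYhs, simp, rule fXs, simp, simp add: Xs_def rempty)
      moreover have "0 \<le> CMI ?p (Ys {l}) (Yhs {l}) (Xs {1..K})"
        by (rule CMI_nonneg) (auto intro: fYhs fXs fYs)
      ultimately show ?thesis by simp
    qed
    have lo: "\<forall>S\<subseteq>{1..K}. \<forall>T\<subseteq>{1..L}. sum C T - sum R S \<ge>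
          CMI ?p (Ys T) (Yhs T) (Xs {1..K}) - CMI ?p (Xs S) (Yhs ({1..L} - T)) (Xs ({1..K} - S))"
      using H by auto
    have eq: "sum C {1..L} - sum R {1..K} = CMI ?p (Ys {1..L}) (Yhs {1..L}) (Xs {1..K})"
    proof -
      have a: "CMI ?p (Ys {1..L}) (Yhs {1..L}) (Xs {1..K}) - CMI ?p (Xs {1..K}) (Yhs ({1..L} - {1..L})) (Xs ({1..K} - {1..K}))
          \<le> sum C {1..L} - sum R {1..K}"
       and b: "sum C {1..L} - sum R {1..K} \<le> CMI ?p (Ys {1..L}) (Yhs {1..L}) (Xs {1..K})"
        using H[rule_format, of "{1..K}" "{1..L}"] by auto
      have "CMI ?p (Xs {1..K}) (Yhs ({1..L} - {1..L})) (Xs ({1..K} - {1..K})) = 0"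
        by (rule CMI_const2[where c="\<lambda>_. undefined"]) (rule fXs, simp, rule fXs, simp, simp add: Yhs_def rempty)
      then show ?thesis using a b by simp
    qed
    show ?thesis unfolding dominant_face_def R_JD_def mem_Collect_eq prod.case
      by (intro conjI ballI, (erule Rnn | erule Cnn | rule lo | rule eq)+)
  qed
  show ?thesis
  proof (rule set_eqI)
    fix x :: "(nat \<Rightarrow> real) \<times> (nat \<Rightarrow> real)"
    obtain R C where x: "x = (R, C)" by (cases x)
    show "x \<in> dominant_face K L ?p \<longleftrightarrow> x \<in> {(R, C). \<forall>S\<subseteq>{1..K}. \<forall>T\<subseteq>{1..L}.
       CMI ?p (Ys T) (Yhs T) (Xs {1..K}) - CMI ?p (Xs S) (Yhs ({1..L} - T)) (Xs ({1..K} - S))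
       \<le> sum C T - sum R S \<and> sum C T - sum R S \<le> CMI ?p (Ys T) (Yhs T) (Xs S)}"
      unfolding x mem_Collect_eq prod.case
    proof
      assume "(R, C) \<in> dominant_face K L ?p" then show "\<forall>S\<subseteq>{1..K}. \<forall>T\<subseteq>{1..L}.
       CMI ?p (Ys T) (Yhs T) (Xs {1..K}) - CMI ?p (Xs S) (Yhs ({1..L} - T)) (Xs ({1..K} - S))
       \<le> sum C T - sum R S \<and> sum C T - sum R S \<le> CMI ?p (Ys T) (Yhs T) (Xs S)" by (rule fwd)
    next
      assume "\<forall>S\<subseteq>{1..K}. \<forall>T\<subseteq>{1..L}.
       CMI ?p (Ys T) (Yhs T) (Xs {1..K}) - CMI ?p (Xs S) (Yhs ({1..L} - T)) (Xs ({1..K} - S))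
       \<le> sum C T - sum R S \<and> sum C T - sum R S \<le> CMI ?p (Ys T) (Yhs T) (Xs S)"
      then show "(R, C) \<in> dominant_face K L ?p" by (rule bwd)
    qed
  qed
qed


end
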